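(* (1) For every $n$, there exists $N$ such that every graph on at least $N$ vertices has a vertex-minor isomorphic to the edgeless graph $\overline{K_n}$ on $n$ vertices. (2) For every $n$, there exists $N$ such that every connected graph having at least $N$ vertices has a vertex-minor isomorphic to $K_n$. (3) For every $n$, there exists $N$ such that every graph having at least $N$ edges has a vertex-minor isomorphic to $K_n$ or to the graph obtained from two disjoint copies of the edgeless graph $\overline{K_n}$ by adding a perfect matching between them (i.e., a perfect matching with $n$ edges, $nK_2$).
   Context: All graphs are simple. A graph $H$ is a vertex-minor of $G$ if $H$ is an induced subgraph of a graph obtained from $G$ by a sequence of local complementations (local complementation at $v$ replaces the subgraph induced on the neighborhood of $v$ by its complement). *)

theory Defs
  imports Main
begin

definition simple_graph :: "'a set \<Rightarrow> ('a \<Rightarrow> 'a \<Rightarrow> bool) \<Rightarrow> bool" where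
  "simple_graph V E \<longleftrightarrow> finite V \<and> (\<forall>x y. E x y \<longrightarrow> x \<in> V \<and> y \<in> V)
     \<and> (\<forall>x y. E x y \<longrightarrow> E y x) \<and> (\<forall>x. \<not> E x x)"

definition local_comp :: "('a \<Rightarrow> 'a \<Rightarrow> bool) \<Rightarrow> 'a \<Rightarrow> ('a \<Rightarrow> 'a \<Rightarrow> bool)" where
  "local_comp E v = (\<lambda>x y. if E v x \<and> E v y \<and> x \<noteq> y then \<not> E x y else E x y)"

inductive lc_reach :: "'a set \<Rightarrow> ('a \<Rightarrow> 'a \<Rightarrow> bool) \<Rightarrow> ('a \<Rightarrow> 'a \<Rightarrow> bool) \<Rightarrow> bool"
  for V where
  lc_refl: "lc_reach V E E"
| lc_step: "lc_reach V E E' \<Longrightarrow> v \<in> V \<Longrightarrow> lc_reach V E (local_comp E' v)"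

definition vertex_minor :: "'a set \<Rightarrow> ('a \<Rightarrow> 'a \<Rightarrow> bool) \<Rightarrow> 'a set \<Rightarrow> ('a \<Rightarrow> 'a \<Rightarrow> bool) \<Rightarrow> bool" where
  "vertex_minor W F V E \<longleftrightarrow> W \<subseteq> V \<and>
     (\<exists>E'. lc_reach V E E' \<and> (\<forall>x y. F x y \<longleftrightarrow> x \<in> W \<and> y \<in> W \<and> E' x y))"

definition graph_iso :: "'a set \<Rightarrow> ('a \<Rightarrow> 'a \<Rightarrow> bool) \<Rightarrow> 'b set \<Rightarrow> ('b \<Rightarrow> 'b \<Rightarrow> bool) \<Rightarrow> bool" where
  "graph_iso V E W F \<longleftrightarrow> (\<exists>f. bij_betw f V W \<and> (\<forall>x\<in>V. \<forall>y\<in>V. E x y \<longleftrightarrow> F (f x) (f y)))"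

definition has_vm_iso :: "'a set \<Rightarrow> ('a \<Rightarrow> 'a \<Rightarrow> bool) \<Rightarrow> 'b set \<Rightarrow> ('b \<Rightarrow> 'b \<Rightarrow> bool) \<Rightarrow> bool" where
  "has_vm_iso V E W0 F0 \<longleftrightarrow> (\<exists>W F. vertex_minor W F V E \<and> graph_iso W F W0 F0)"

definition graph_connected :: "'a set \<Rightarrow> ('a \<Rightarrow> 'a \<Rightarrow> bool) \<Rightarrow> bool" where
  "graph_connected V E \<longleftrightarrow> (\<forall>x\<in>V. \<forall>y\<in>V. (x, y) \<in> {(a, b). E a b}\<^sup>*)"

definition edges :: "('a \<Rightarrow> 'a \<Rightarrow> bool) \<Rightarrow> 'a set set" where
  "edges E = {{x, y} | x y. E x y}"

definition edgeless_verts :: "nat \<Rightarrow> nat set" where "edgeless_verts n = {0..<n}"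
definition edgeless_adj :: "nat \<Rightarrow> nat \<Rightarrow> bool" where "edgeless_adj x y = False"
definition complete_adj :: "nat \<Rightarrow> nat \<Rightarrow> nat \<Rightarrow> bool" where
  "complete_adj n x y \<longleftrightarrow> x < n \<and> y < n \<and> x \<noteq> y"
definition matching_verts :: "nat \<Rightarrow> nat set" where "matching_verts n = {0..<2*n}"
definition matching_adj :: "nat \<Rightarrow> nat \<Rightarrow> nat \<Rightarrow> bool" where
  "matching_adj n x y \<longleftrightarrow> x < 2*n \<and> y < 2*n \<and> (x = y + n \<or> y = x + n)"

end

theory Submission
  imports Defs
begin


lemma local_comp_simple:
  assumes "simple_graph V E" shows "simple_graph V (local_comp E v)"
  using assms unfolding simple_graph_def local_comp_def by metis

lemma lc_reach_simple:
  assumes "lc_reach V E E'" "simple_graph V E" shows "simple_graph V E'"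
  using assms by induction (auto intro: local_comp_simple)

lemma realize:
  fixes g :: "nat \<Rightarrow> 'a"
  assumes "lc_reach V E E'" "inj_on g {0..<k}" "g ` {0..<k} \<subseteq> V"
    "\<forall>i<k. \<forall>j<k. E' (g i) (g j) \<longleftrightarrow> Gz i j"
  shows "has_vm_iso V E {0..<k} Gz"
proof -
  let ?W = "g ` {0..<k}"
  let ?F = "\<lambda>x y. x \<in> ?W \<and> y \<in> ?W \<and> E' x y"
  have vm: "vertex_minor ?W ?F V E" unfolding vertex_minor_def using assms by blast
  have b: "bij_betw g {0..<k} ?W" using assms(2) by (simp add: bij_betw_def)
  have b2: "bij_betw (the_inv_into {0..<k} g) ?W {0..<k}" using bij_betw_the_inv_into[OF b] .
  have "\<forall>x\<in>?W. \<forall>y\<in>?W. ?F x y \<longleftrightarrow> Gz (the_inv_into {0..<k} g x) (the_inv_into {0..<k} g y)"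
  proof (intro ballI)
    fix x y assume "x \<in> ?W" "y \<in> ?W"
    then obtain i j where ij: "i < k" "j < k" "x = g i" "y = g j" by auto
    have "the_inv_into {0..<k} g x = i" "the_inv_into {0..<k} g y = j"
      using ij assms(2) by (auto simp: the_inv_into_f_f)
    then show "?F x y \<longleftrightarrow> Gz (the_inv_into {0..<k} g x) (the_inv_into {0..<k} g y)"
      using ij assms(4) by auto
  qed
  then have "graph_iso ?W ?F {0..<k} Gz" unfolding graph_iso_def using b2 by blast
  then show ?thesis unfolding has_vm_iso_def using vm by blast
qed

lemma realize_set:
  assumes "lc_reach V E E'" "S \<subseteq> V" "finite S" "card S = k"
    "\<forall>x\<in>S. \<forall>y\<in>S. x \<noteq> y \<longrightarrow> (E' x y \<longleftrightarrow> P)" "\<forall>x. \<not> E' x x"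
    "\<forall>i<k. \<forall>j<k. Gz i j \<longleftrightarrow> (i \<noteq> j \<and> P)"
  shows "has_vm_iso V E {0..<k} Gz"
proof -
  obtain h where h: "bij_betw h {0..<k} S" using ex_bij_betw_nat_finite[OF assms(3)] assms(4) by auto
  have inj: "inj_on h {0..<k}" and im: "h ` {0..<k} = S" using h by (auto simp: bij_betw_def)
  show ?thesis
  proof (rule realize[OF assms(1) inj])
    show "h ` {0..<k} \<subseteq> V" using im assms(2) by simp
    show "\<forall>i<k. \<forall>j<k. E' (h i) (h j) \<longleftrightarrow> Gz i j"
    proof (intro allI impI)
      fix i j assume "i < k" "j < k"
      then have "h i \<in> S" "h j \<in> S" "h i = h j \<longleftrightarrow> i = j" using im inj by (auto simp: inj_on_def)
      then show "E' (h i) (h j) \<longleftrightarrow> Gz i j" using assms(5,6,7) \<open>i<k\<close> \<open>j<k\<close> by metis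
    qed
  qed
qed

lemma ramsey:
  fixes E :: "'a \<Rightarrow> 'a \<Rightarrow> bool"
  assumes sym: "\<forall>x y. E x y \<longrightarrow> E y x"
  shows "finite V \<Longrightarrow> card V \<ge> 2^(a+b) \<Longrightarrow> \<exists>S\<subseteq>V. finite S \<and>
     ((card S = a \<and> (\<forall>x\<in>S. \<forall>y\<in>S. x \<noteq> y \<longrightarrow> \<not> E x y)) \<or>
      (card S = b \<and> (\<forall>x\<in>S. \<forall>y\<in>S. x \<noteq> y \<longrightarrow> E x y)))"
proof (induction "a+b" arbitrary: a b V)
  case 0 then show ?case by (intro exI[of _ "{}"]) auto
next
  case (Suc s)
  show ?case
  proof (cases "a = 0 \<or> b = 0")
    case True then show ?thesis by (intro exI[of _ "{}"]) auto
  next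
    case False
    then obtain a' b' where a': "a = Suc a'" and b': "b = Suc b'" by (metis not0_implies_Suc)
    have "V \<noteq> {}" using Suc.prems by auto
    then obtain v where v: "v \<in> V" by auto
    define A where "A = {y \<in> V - {v}. \<not> E v y}"
    define B where "B = {y \<in> V - {v}. E v y}"
    have fA: "finite A" "finite B" using Suc.prems by (auto simp: A_def B_def)
    have un: "A \<union> B = V - {v}" "A \<inter> B = {}" by (auto simp: A_def B_def)
    have "card A + card B = card V - 1" using card_Un_disjoint[OF fA un(2)] un(1) v Suc.prems(1)
      by simp
    moreover have "(2::nat)^(a+b) = 2^(a'+b) + 2^(a+b')" using a' b' by simp
    ultimately have "card A \<ge> 2^(a'+b) \<or> card B \<ge> 2^(a+b')" using Suc.prems(2) by linarith
    then show ?thesis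
    proof
      assume cA: "card A \<ge> 2^(a'+b)"
      have "s = a' + b" using Suc.hyps(2) a' by simp
      from Suc.hyps(1)[OF this fA(1) cA] obtain S where S: "S \<subseteq> A" "finite S"
        "(card S = a' \<and> (\<forall>x\<in>S. \<forall>y\<in>S. x \<noteq> y \<longrightarrow> \<not> E x y)) \<or>
         (card S = b \<and> (\<forall>x\<in>S. \<forall>y\<in>S. x \<noteq> y \<longrightarrow> E x y))" by blast
      show ?thesis
      proof (cases "card S = a' \<and> (\<forall>x\<in>S. \<forall>y\<in>S. x \<noteq> y \<longrightarrow> \<not> E x y)")
        case True
        have "v \<notin> S" using S(1) by (auto simp: A_def)
        then have "card (insert v S) = a" using True S(2) a' by simp
        moreover have "\<forall>x\<in>insert v S. \<forall>y\<in>insert v S. x \<noteq> y \<longrightarrow> \<not> E x y"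
          using True S(1) sym by (auto simp: A_def)
        moreover have "insert v S \<subseteq> V" using S(1) v by (auto simp: A_def)
        ultimately show ?thesis using S(2) by (intro exI[of _ "insert v S"]) auto
      next
        case False
        then show ?thesis using S A_def by (intro exI[of _ S]) auto
      qed
    next
      assume cB: "card B \<ge> 2^(a+b')"
      have "s = a + b'" using Suc.hyps(2) b' by simp
      from Suc.hyps(1)[OF this fA(2) cB] obtain S where S: "S \<subseteq> B" "finite S"
        "(card S = a \<and> (\<forall>x\<in>S. \<forall>y\<in>S. x \<noteq> y \<longrightarrow> \<not> E x y)) \<or>
         (card S = b' \<and> (\<forall>x\<in>S. \<forall>y\<in>S. x \<noteq> y \<longrightarrow> E x y))" by blast
      show ?thesis
      proof (cases "card S = b' \<and> (\<forall>x\<in>S. \<forall>y\<in>S. x \<noteq> y \<longrightarrow> E x y)")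
        case True
        have "v \<notin> S" using S(1) by (auto simp: B_def)
        then have "card (insert v S) = b" using True S(2) b' by simp
        moreover have "\<forall>x\<in>insert v S. \<forall>y\<in>insert v S. x \<noteq> y \<longrightarrow> E x y"
          using True S(1) sym by (auto simp: B_def)
        moreover have "insert v S \<subseteq> V" using S(1) v by (auto simp: B_def)
        ultimately show ?thesis using S(2) by (intro exI[of _ "insert v S"]) auto
      next
        case False
        then show ?thesis using S B_def by (intro exI[of _ S]) auto
      qed
    qed
  qed
qed


lemma high_degree:
  assumes "lc_reach V E E'" "simple_graph V E" "c \<in> V" "card {y. E' c y} \<ge> 2^(n+n)"
  shows "has_vm_iso V E {0..<n} (complete_adj n)"
proof -
  have s: "simple_graph V E'" using lc_reach_simple assms by blast
  let ?N = "{y. E' c y}"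
  have NV: "?N \<subseteq> V" using s by (auto simp: simple_graph_def)
  have fN: "finite ?N" using s NV finite_subset by (auto simp: simple_graph_def)
  have sym: "\<forall>x y. E' x y \<longrightarrow> E' y x" "\<forall>x. \<not> E' x x" using s by (auto simp: simple_graph_def)
  obtain S where S: "S \<subseteq> ?N" "finite S"
     "(card S = n \<and> (\<forall>x\<in>S. \<forall>y\<in>S. x \<noteq> y \<longrightarrow> \<not> E' x y)) \<or>
      (card S = n \<and> (\<forall>x\<in>S. \<forall>y\<in>S. x \<noteq> y \<longrightarrow> E' x y))"
    using ramsey[OF sym(1) fN assms(4)] by blast
  have Gz: "\<forall>i<n. \<forall>j<n. complete_adj n i j \<longleftrightarrow> (i \<noteq> j \<and> True)" by (simp add: complete_adj_def)
  show ?thesis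
  proof (cases "\<forall>x\<in>S. \<forall>y\<in>S. x \<noteq> y \<longrightarrow> E' x y")
    case True
    then show ?thesis using realize_set[OF assms(1), of S n True] S NV sym(2) Gz by auto
  next
    case False
    then have cS: "card S = n" and ind: "\<forall>x\<in>S. \<forall>y\<in>S. x \<noteq> y \<longrightarrow> \<not> E' x y" using S(3) by auto
    let ?E = "local_comp E' c"
    have r: "lc_reach V E ?E" using lc_step[OF assms(1) assms(3)] .
    have "\<forall>x\<in>S. \<forall>y\<in>S. x \<noteq> y \<longrightarrow> (?E x y \<longleftrightarrow> True)" using ind S(1) by (auto simp: local_comp_def)
    moreover have "\<forall>x. \<not> ?E x x" using sym(2) by (auto simp: local_comp_def)
    ultimately show ?thesis using realize_set[OF r, of S n True] S(1,2) NV cS Gz by auto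
  qed
qed

lemma part1:
  assumes "simple_graph V E" "card V \<ge> 2^(n + Suc n)"
  shows "has_vm_iso V E (edgeless_verts n) edgeless_adj"
proof -
  have fV: "finite V" and sym: "\<forall>x y. E x y \<longrightarrow> E y x" "\<forall>x. \<not> E x x" using assms(1) by (auto simp: simple_graph_def)
  obtain S where S: "S \<subseteq> V" "finite S"
     "(card S = n \<and> (\<forall>x\<in>S. \<forall>y\<in>S. x \<noteq> y \<longrightarrow> \<not> E x y)) \<or>
      (card S = Suc n \<and> (\<forall>x\<in>S. \<forall>y\<in>S. x \<noteq> y \<longrightarrow> E x y))"
    using ramsey[OF sym(1) fV assms(2)] by blast
  have Gz: "\<forall>i<n. \<forall>j<n. edgeless_adj i j \<longleftrightarrow> (i \<noteq> j \<and> False)" by (simp add: edgeless_adj_def)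
  show ?thesis
  proof (cases "card S = n \<and> (\<forall>x\<in>S. \<forall>y\<in>S. x \<noteq> y \<longrightarrow> \<not> E x y)")
    case True
    then show ?thesis unfolding edgeless_verts_def
      using realize_set[OF lc_refl, where S=S and k=n and P=False and Gz=edgeless_adj and V=V] S sym(2) Gz by auto
  next
    case False
    then have cS: "card S = Suc n" and cl: "\<forall>x\<in>S. \<forall>y\<in>S. x \<noteq> y \<longrightarrow> E x y" using S(3) by auto
    then obtain v where v: "v \<in> S" by (metis card.empty ex_in_conv nat.distinct(1))
    let ?E = "local_comp E v"
    have r: "lc_reach V E ?E" using lc_step[OF lc_refl, of v V E] v S(1) by auto
    have "\<forall>x\<in>S-{v}. \<forall>y\<in>S-{v}. x \<noteq> y \<longrightarrow> (?E x y \<longleftrightarrow> False)" using cl v by (auto simp: local_comp_def)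
    moreover have "\<forall>x. \<not> ?E x x" using sym(2) by (auto simp: local_comp_def)
    moreover have "card (S - {v}) = n" using cS v S(2) by simp
    ultimately show ?thesis unfolding edgeless_verts_def
      using realize_set[OF r, where S="S-{v}" and k=n and P=False and Gz=edgeless_adj] S(1,2) Gz by auto
  qed
qed



fun layer :: "('a \<Rightarrow> 'a \<Rightarrow> bool) \<Rightarrow> 'a \<Rightarrow> nat \<Rightarrow> 'a set" where
  "layer E v 0 = {v}"
| "layer E v (Suc k) = layer E v k \<union> {y. \<exists>x\<in>layer E v k. E x y}"

lemma layer_mono: "i \<le> j \<Longrightarrow> layer E v i \<subseteq> layer E v j"
  by (induction j) (auto simp: le_Suc_eq)

lemma layer_sub: "simple_graph V E \<Longrightarrow> v \<in> V \<Longrightarrow> layer E v k \<subseteq> V"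
  by (induction k) (auto simp: simple_graph_def)

lemma layer_card:
  assumes "simple_graph V E" "v \<in> V" "\<forall>x. card {y. E x y} \<le> D"
  shows "card (layer E v k) \<le> (Suc D)^k"
proof (induction k)
  case 0 then show ?case by simp
next
  case (Suc k)
  let ?L = "layer E v k"
  have fV: "finite V" using assms(1) by (simp add: simple_graph_def)
  have fL: "finite ?L" using finite_subset[OF layer_sub[OF assms(1,2)] fV] .
  have eq: "layer E v (Suc k) = ?L \<union> (\<Union>x\<in>?L. {y. E x y})" by auto
  have fin: "\<And>x. finite {y. E x y}" using assms(1) finite_subset unfolding simple_graph_def
    by (metis (no_types, lifting) mem_Collect_eq subsetI)
  have "card (\<Union>x\<in>?L. {y. E x y}) \<le> (\<Sum>x\<in>?L. card {y. E x y})" using card_UN_le[OF fL] .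
  also have "\<dots> \<le> (\<Sum>x\<in>?L. D)" using assms(3) by (intro sum_mono) auto
  also have "\<dots> = card ?L * D" by simp
  finally have c1: "card (\<Union>x\<in>?L. {y. E x y}) \<le> card ?L * D" .
  have "card (layer E v (Suc k)) \<le> card ?L + card (\<Union>x\<in>?L. {y. E x y})"
    unfolding eq by (rule card_Un_le)
  also have "\<dots> \<le> card ?L * Suc D" using c1 by simp
  also have "\<dots> \<le> (Suc D)^k * Suc D" using Suc.IH by (intro mult_right_mono) auto
  finally show ?case by (simp add: mult.commute)
qed

lemma layer_stable: "layer E v (Suc k) = layer E v k \<Longrightarrow> layer E v (k + j) = layer E v k"
  by (induction j) auto

lemma layer_reach: "(v, y) \<in> {(a, b). E a b}\<^sup>* \<Longrightarrow> \<exists>k. y \<in> layer E v k"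
proof (induction rule: rtrancl_induct)
  case base then show ?case by (intro exI[of _ 0]) simp
next
  case (step y z)
  then obtain k where "y \<in> layer E v k" by auto
  then show ?case using step by (intro exI[of _ "Suc k"]) auto
qed

lemma layer_path:
  "y \<in> layer E v k \<Longrightarrow> (\<forall>i<k. y \<notin> layer E v i) \<Longrightarrow> \<exists>p. p 0 = v \<and> p k = y \<and>
     (\<forall>i\<le>k. p i \<in> layer E v i \<and> (\<forall>j<i. p i \<notin> layer E v j)) \<and> (\<forall>i<k. E (p i) (p (Suc i)))"
proof (induction k arbitrary: y)
  case 0 then show ?case by (intro exI[of _ "\<lambda>_. v"]) auto
next
  case (Suc k)
  have "y \<notin> layer E v k" using Suc.prems(2) by auto
  then obtain x where x: "x \<in> layer E v k" "E x y" using Suc.prems(1) by auto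
  have xn: "\<forall>i<k. x \<notin> layer E v i"
  proof (intro allI impI notI)
    fix i assume "i < k" "x \<in> layer E v i"
    then have "y \<in> layer E v (Suc i)" using x by auto
    moreover have "layer E v (Suc i) \<subseteq> layer E v k" using \<open>i<k\<close> by (intro layer_mono) simp
    ultimately show False using \<open>y \<notin> layer E v k\<close> by auto
  qed
  obtain p where p: "p 0 = v" "p k = x" "\<forall>i\<le>k. p i \<in> layer E v i \<and> (\<forall>j<i. p i \<notin> layer E v j)"
      "\<forall>i<k. E (p i) (p (Suc i))" using Suc.IH[OF x(1) xn] by blast
  let ?q = "p(Suc k := y)"
  have q1: "\<forall>i\<le>Suc k. ?q i \<in> layer E v i \<and> (\<forall>j<i. ?q i \<notin> layer E v j)"
  proof (intro allI impI)
    fix i assume i: "i \<le> Suc k"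
    show "?q i \<in> layer E v i \<and> (\<forall>j<i. ?q i \<notin> layer E v j)"
    proof (cases "i = Suc k")
      case True then show ?thesis using Suc.prems by simp
    next
      case False then show ?thesis using p(3) i by simp
    qed
  qed
  have q2: "\<forall>i<Suc k. E (?q i) (?q (Suc i))"
  proof (intro allI impI)
    fix i assume i: "i < Suc k"
    show "E (?q i) (?q (Suc i))"
    proof (cases "i = k")
      case True then show ?thesis using p(2) x(2) by simp
    next
      case False then show ?thesis using p(4) i by simp
    qed
  qed
  show ?case using q1 q2 p(1) by (intro exI[of _ ?q]) simp
qed

lemma path_induced:
  assumes "simple_graph V E" "\<forall>i\<le>K. p i \<in> layer E v i \<and> (\<forall>j<i. p i \<notin> layer E v j)"
    "\<forall>i<K. E (p i) (p (Suc i))"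
  shows "\<forall>i\<le>K. \<forall>j\<le>K. E (p i) (p j) \<longleftrightarrow> (j = Suc i \<or> i = Suc j)"
    and "inj_on p {..K}"
proof -
  have sym: "\<forall>x y. E x y \<longrightarrow> E y x" "\<forall>x. \<not> E x x" using assms(1) by (auto simp: simple_graph_def)
  have one: "\<not> E (p i) (p j)" if "i \<le> K" "j \<le> K" "Suc i < j" for i j
  proof
    assume "E (p i) (p j)"
    moreover have "p i \<in> layer E v i" using assms(2) that by auto
    ultimately have pj: "p j \<in> layer E v (Suc i)" by auto
    have "\<forall>j'<j. p j \<notin> layer E v j'" using assms(2) that(2) by blast
    then show False using pj that(3) by blast
  qed
  show "\<forall>i\<le>K. \<forall>j\<le>K. E (p i) (p j) \<longleftrightarrow> (j = Suc i \<or> i = Suc j)"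
  proof (intro allI impI)
    fix i j assume ij: "i \<le> K" "j \<le> K"
    show "E (p i) (p j) \<longleftrightarrow> (j = Suc i \<or> i = Suc j)"
    proof
      assume e: "E (p i) (p j)"
      show "j = Suc i \<or> i = Suc j"
      proof (rule ccontr)
        assume "\<not> (j = Suc i \<or> i = Suc j)"
        then consider "i = j" | "Suc i < j" | "Suc j < i" by linarith
        then show False
        proof cases
          case 1 then show ?thesis using e sym by auto
        next
          case 2 then show ?thesis using one ij e by auto
        next
          case 3 then show ?thesis using one ij e sym by blast
        qed
      qed
    next
      assume "j = Suc i \<or> i = Suc j"
      then show "E (p i) (p j)" using assms(3) ij sym by auto
    qed
  qed
  show "inj_on p {..K}"
  proof (rule inj_onI)
    fix i j assume ij: "i \<in> {..K}" "j \<in> {..K}" "p i = p j"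
    show "i = j"
    proof (rule ccontr)
      assume "i \<noteq> j"
      then consider "i < j" | "j < i" by linarith
      then show False
      proof cases
        case 1
        have "p j \<in> layer E v i" using assms(2) ij by auto
        moreover have "\<forall>j'<j. p j \<notin> layer E v j'" using assms(2) ij by blast
        ultimately show ?thesis using 1 by blast
      next
        case 2
        have "p i \<in> layer E v j" using assms(2) ij by (metis atMost_iff)
        moreover have "\<forall>j'<i. p i \<notin> layer E v j'" using assms(2) ij by blast
        ultimately show ?thesis using 2 by blast
      qed
    qed
  qed
qed

fun sweep :: "('a \<Rightarrow> 'a \<Rightarrow> bool) \<Rightarrow> (nat \<Rightarrow> 'a) \<Rightarrow> nat \<Rightarrow> ('a \<Rightarrow> 'a \<Rightarrow> bool)" where
  "sweep E p 0 = E"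
| "sweep E p (Suc k) = local_comp (sweep E p k) (p (Suc k))"

lemma sweep_reach: "\<forall>i\<le>k. p i \<in> V \<Longrightarrow> lc_reach V E (sweep E p k)"
  by (induction k) (auto intro: lc_reach.intros)

lemma sweep_inv:
  assumes "simple_graph V E" "\<forall>i\<le>K. p i \<in> V" "inj_on p {..K}"
    "\<forall>i\<le>K. \<forall>j\<le>K. E (p i) (p j) \<longleftrightarrow> (j = Suc i \<or> i = Suc j)"
  shows "Suc k \<le> K \<Longrightarrow> (\<forall>j\<le>k. sweep E p k (p (Suc k)) (p j)) \<and>
     (\<forall>i\<le>K. \<forall>j\<le>K. (Suc (Suc k) \<le> i \<or> Suc (Suc k) \<le> j) \<longrightarrow>
        (sweep E p k (p i) (p j) \<longleftrightarrow> (j = Suc i \<or> i = Suc j)))"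
proof (induction k)
  case 0 then show ?case using assms(4) by auto
next
  case (Suc k)
  let ?F = "sweep E p k"
  let ?c = "p (Suc k)"
  have IH: "\<forall>j\<le>k. ?F ?c (p j)" "\<forall>i\<le>K. \<forall>j\<le>K. (Suc (Suc k) \<le> i \<or> Suc (Suc k) \<le> j) \<longrightarrow>
        (?F (p i) (p j) \<longleftrightarrow> (j = Suc i \<or> i = Suc j))" using Suc by auto
  have s: "simple_graph V ?F"
    using lc_reach_simple[OF sweep_reach assms(1)] assms(2) Suc.prems by auto
  have irr: "\<forall>x. \<not> ?F x x" using s by (auto simp: simple_graph_def)
  have injv: "p i \<noteq> p j" if "i \<le> K" "j \<le> K" "i \<noteq> j" for i j
    using assms(3) that by (auto simp: inj_on_def)
  have A: "\<forall>j\<le>Suc k. local_comp ?F ?c (p (Suc (Suc k))) (p j)"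
  proof (intro allI impI)
    fix j assume j: "j \<le> Suc k"
    show "local_comp ?F ?c (p (Suc (Suc k))) (p j)"
    proof (cases "j = Suc k")
      case True
      have "?F (p (Suc (Suc k))) (p (Suc k))" using IH(2) Suc.prems by auto
      then show ?thesis using True irr by (simp add: local_comp_def)
    next
      case False
      then have jk: "j \<le> k" using j by simp
      have a: "?F ?c (p (Suc (Suc k)))" using IH(2) Suc.prems by auto
      have b: "?F ?c (p j)" using IH(1) jk by auto
      have c: "p (Suc (Suc k)) \<noteq> p j" using injv Suc.prems jk by auto
      have d: "\<not> ?F (p (Suc (Suc k))) (p j)" using IH(2) Suc.prems jk by auto
      show ?thesis using a b c d s unfolding local_comp_def simple_graph_def by metis
    qed
  qed
  have B: "\<forall>i\<le>K. \<forall>j\<le>K. (Suc (Suc (Suc k)) \<le> i \<or> Suc (Suc (Suc k)) \<le> j) \<longrightarrow>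
        (local_comp ?F ?c (p i) (p j) \<longleftrightarrow> (j = Suc i \<or> i = Suc j))"
  proof (intro allI impI)
    fix i j assume ij: "i \<le> K" "j \<le> K" "Suc (Suc (Suc k)) \<le> i \<or> Suc (Suc (Suc k)) \<le> j"
    have "\<not> ?F ?c (p i) \<or> \<not> ?F ?c (p j)"
    proof (cases "Suc (Suc (Suc k)) \<le> i")
      case True
      then have "\<not> ?F ?c (p i)" using IH(2) ij Suc.prems by (metis Suc_leD Suc_n_not_le_n le_SucI nat.inject)
      then show ?thesis by simp
    next
      case False
      then have "Suc (Suc (Suc k)) \<le> j" using ij by simp
      then have "\<not> ?F ?c (p j)" using IH(2) ij Suc.prems by (metis Suc_leD Suc_n_not_le_n le_SucI nat.inject)
      then show ?thesis by simp
    qed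
    then have "local_comp ?F ?c (p i) (p j) = ?F (p i) (p j)" by (auto simp: local_comp_def)
    then show "local_comp ?F ?c (p i) (p j) \<longleftrightarrow> (j = Suc i \<or> i = Suc j)" using IH(2) ij by auto
  qed
  show ?case using A B by simp
qed




lemma part2:
  assumes sg: "simple_graph V E" and con: "graph_connected V E" and cV: "card V \<ge> (2^(n+n))^(2^(n+n)) + 1"
  shows "has_vm_iso V E {0..<n} (complete_adj n)"
proof -
  define R :: nat where "R = 2^(n+n)"
  have R1: "R \<ge> 1" unfolding R_def by simp
  have fV: "finite V" using sg by (simp add: simple_graph_def)
  have "card V \<noteq> 0" using cV by linarith
  then have "V \<noteq> {}" by auto
  then obtain v where v: "v \<in> V" by auto
  show ?thesis
  proof (cases "\<exists>c\<in>V. card {y. E c y} \<ge> R")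
    case True
    then obtain c where "c \<in> V" "card {y. E c y} \<ge> 2^(n+n)" unfolding R_def by blast
    then show ?thesis using high_degree[OF lc_refl sg] by blast
  next
    case False
    have deg: "\<forall>x. card {y. E x y} \<le> R - 1"
    proof
      fix x show "card {y. E x y} \<le> R - 1"
      proof (cases "x \<in> V")
        case True then have "\<not> card {y. E x y} \<ge> R" using False by blast
        then show ?thesis by linarith
      next
        case False
        then have "{y. E x y} = {}" using sg by (auto simp: simple_graph_def)
        then show ?thesis by simp
      qed
    qed
    have "card (layer E v R) \<le> (Suc (R - 1))^R" using layer_card[OF sg v deg, of R] .
    then have cl: "card (layer E v R) \<le> R^R" using R1 by simp
    have lsub: "\<And>k. layer E v k \<subseteq> V" using layer_sub[OF sg v] .
    have neq: "layer E v (Suc R) \<noteq> layer E v R"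
    proof
      assume st: "layer E v (Suc R) = layer E v R"
      have all: "\<And>j. layer E v j \<subseteq> layer E v R"
      proof -
        fix j show "layer E v j \<subseteq> layer E v R"
        proof (cases "j \<le> R")
          case True then show ?thesis by (rule layer_mono)
        next
          case False
          then have jj: "R + (j - R) = j" by simp
          have "layer E v (R + (j - R)) = layer E v R" by (rule layer_stable[OF st])
          then show ?thesis unfolding jj by simp
        qed
      qed
      have "V \<subseteq> layer E v R"
      proof
        fix y assume "y \<in> V"
        then have "(v, y) \<in> {(a, b). E a b}\<^sup>*" using con v unfolding graph_connected_def by blast
        then obtain k where "y \<in> layer E v k" using layer_reach[of v y E] by blast
        then show "y \<in> layer E v R" using all by blast
      qed
      then have "card V \<le> card (layer E v R)" using card_mono[OF finite_subset[OF lsub fV]] by blast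
      moreover have "card V \<ge> R^R + 1" using cV by (simp only: R_def)
      ultimately show False using cl by linarith
    qed
    have "layer E v R \<subseteq> layer E v (Suc R)" by (rule layer_mono) simp
    then obtain y where y: "y \<in> layer E v (Suc R)" "y \<notin> layer E v R" using neq by blast
    have yn: "\<forall>i<Suc R. y \<notin> layer E v i"
    proof (intro allI impI)
      fix i assume "i < Suc R"
      then have "layer E v i \<subseteq> layer E v R" by (intro layer_mono) simp
      then show "y \<notin> layer E v i" using y(2) by blast
    qed
    obtain p where p: "p 0 = v" "p (Suc R) = y"
      "\<forall>i\<le>Suc R. p i \<in> layer E v i \<and> (\<forall>j<i. p i \<notin> layer E v j)"
      "\<forall>i<Suc R. E (p i) (p (Suc i))" using layer_path[OF y(1) yn] by blast
    have pV: "\<forall>i\<le>Suc R. p i \<in> V" using p(3) lsub by blast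
    note ind = path_induced[OF sg p(3) p(4)]
    have RR: "Suc R \<le> Suc R" by simp
    have sw: "\<forall>j\<le>R. sweep E p R (p (Suc R)) (p j)"
      using sweep_inv[OF sg pV ind(2) ind(1), where k=R, OF RR] by blast
    let ?E = "sweep E p R"
    have pV': "\<forall>i\<le>R. p i \<in> V" using pV by simp
    have r: "lc_reach V E ?E" using sweep_reach[OF pV'] .
    have s: "simple_graph V ?E" using lc_reach_simple[OF r sg] .
    have "{z. ?E (p (Suc R)) z} \<subseteq> V" using s unfolding simple_graph_def by blast
    then have fN: "finite {z. ?E (p (Suc R)) z}" using fV finite_subset by blast
    have sub: "p ` {..R} \<subseteq> {z. ?E (p (Suc R)) z}" using sw by auto
    have "inj_on p {..R}" using inj_on_subset[OF ind(2)] by (simp add: subset_eq)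
    then have "card (p ` {..R}) = Suc R" by (simp add: card_image)
    then have "card {z. ?E (p (Suc R)) z} \<ge> R" using card_mono[OF fN sub] by simp
    then have "card {z. ?E (p (Suc R)) z} \<ge> 2^(n+n)" unfolding R_def .
    moreover have "p (Suc R) \<in> V" using pV by simp
    ultimately show ?thesis using high_degree[OF r sg] by blast
  qed
qed



lemma edges_finite: "simple_graph V E \<Longrightarrow> finite (edges E)"
proof -
  assume sg: "simple_graph V E"
  have "edges E \<subseteq> (\<lambda>(u, w). {u, w}) ` (V \<times> V)"
    using sg unfolding edges_def simple_graph_def by auto
  moreover have "finite ((\<lambda>(u, w). {u, w}) ` (V \<times> V))" using sg by (simp add: simple_graph_def)
  ultimately show ?thesis by (rule finite_subset)
qed

lemma nbr_finite: "simple_graph V E \<Longrightarrow> finite {y. E x y}"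
proof -
  assume sg: "simple_graph V E"
  have "{y. E x y} \<subseteq> V" using sg unfolding simple_graph_def by blast
  then show ?thesis using sg finite_subset unfolding simple_graph_def by blast
qed

lemma matching:
  fixes E :: "'a \<Rightarrow> 'a \<Rightarrow> bool"
  shows "simple_graph V E \<Longrightarrow> (\<forall>x. card {y. E x y} \<le> D) \<Longrightarrow> card (edges E) \<ge> k * (2*D*D) + 1 \<Longrightarrow>
   \<exists>a b. (\<forall>i<k. a i \<in> V \<and> b i \<in> V) \<and> (\<forall>i<k. \<forall>j<k. (E (a i) (b j) \<longleftrightarrow> i = j) \<and> \<not> E (a i) (a j)
      \<and> \<not> E (b i) (b j) \<and> a i \<noteq> b j \<and> (i \<noteq> j \<longrightarrow> a i \<noteq> a j \<and> b i \<noteq> b j))"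
proof (induction k arbitrary: V E)
  case 0 then show ?case by auto
next
  case (Suc k)
  note sg = Suc.prems(1)
  have sym: "\<forall>x y. E x y \<longrightarrow> E y x" "\<forall>x. \<not> E x x" "\<forall>x y. E x y \<longrightarrow> x \<in> V \<and> y \<in> V"
    using sg by (auto simp: simple_graph_def)
  have "card (edges E) \<noteq> 0" using Suc.prems(3) by linarith
  then have "edges E \<noteq> {}" by auto
  then obtain x y where xy: "E x y" unfolding edges_def by blast
  define S where "S = {z. E x z} \<union> {z. E y z}"
  define V' where "V' = V - S"
  define E' where "E' = (\<lambda>u w. E u w \<and> u \<notin> S \<and> w \<notin> S)"
  have sg': "simple_graph V' E'" using sg unfolding simple_graph_def V'_def E'_def by auto
  have deg': "\<forall>u. card {w. E' u w} \<le> D"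
  proof
    fix u
    have "{w. E' u w} \<subseteq> {w. E u w}" unfolding E'_def by auto
    then have "card {w. E' u w} \<le> card {w. E u w}" using card_mono[OF nbr_finite[OF sg]] by blast
    then show "card {w. E' u w} \<le> D" using Suc.prems(2) by (meson order_trans)
  qed
  have fS: "finite S" unfolding S_def using nbr_finite[OF sg] by simp
  have cS: "card S \<le> 2 * D"
  proof -
    have "card S \<le> card {z. E x z} + card {z. E y z}" unfolding S_def by (rule card_Un_le)
    then show ?thesis using Suc.prems(2) by (metis add_mono mult_2 order_trans)
  qed
  let ?U = "\<Union>s\<in>S. (\<lambda>z. {s, z}) ` {z. E s z}"
  have sub: "edges E \<subseteq> edges E' \<union> ?U"
  proof
    fix e assume "e \<in> edges E"
    then obtain u w where e: "e = {u, w}" "E u w" unfolding edges_def by blast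
    show "e \<in> edges E' \<union> ?U"
    proof (cases "u \<in> S")
      case True then show ?thesis using e by blast
    next
      case False
      show ?thesis
      proof (cases "w \<in> S")
        case True
        have "E w u" using e sym by blast
        then have "e \<in> (\<lambda>z. {w, z}) ` {z. E w z}" using e by (auto simp: insert_commute)
        then show ?thesis using True by blast
      next
        case False
        then have "E' u w" using e \<open>u \<notin> S\<close> unfolding E'_def by blast
        then show ?thesis using e unfolding edges_def by blast
      qed
    qed
  qed
  have fU: "finite ?U" using fS nbr_finite[OF sg] by blast
  have "card ?U \<le> (\<Sum>s\<in>S. card ((\<lambda>z. {s, z}) ` {z. E s z}))" by (rule card_UN_le[OF fS])
  also have "\<dots> \<le> (\<Sum>s\<in>S. D)"
  proof (rule sum_mono)
    fix s
    have "card ((\<lambda>z. {s, z}) ` {z. E s z}) \<le> card {z. E s z}" using card_image_le[OF nbr_finite[OF sg]] .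
    then show "card ((\<lambda>z. {s, z}) ` {z. E s z}) \<le> D" using Suc.prems(2) by (meson order_trans)
  qed
  also have "\<dots> = card S * D" by simp
  also have "\<dots> \<le> 2 * D * D" using cS by (simp add: mult_right_mono)
  finally have cU: "card ?U \<le> 2 * D * D" .
  have "card (edges E) \<le> card (edges E' \<union> ?U)" using card_mono[OF _ sub] edges_finite[OF sg'] fU by blast
  also have "\<dots> \<le> card (edges E') + card ?U" by (rule card_Un_le)
  finally have "card (edges E) \<le> card (edges E') + 2 * D * D" using cU by linarith
  then have ce: "card (edges E') \<ge> k * (2*D*D) + 1" using Suc.prems(3) by simp
  obtain a b where ab: "\<forall>i<k. a i \<in> V' \<and> b i \<in> V'" "\<forall>i<k. \<forall>j<k. (E' (a i) (b j) \<longleftrightarrow> i = j) \<and> \<not> E' (a i) (a j)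
      \<and> \<not> E' (b i) (b j) \<and> a i \<noteq> b j \<and> (i \<noteq> j \<longrightarrow> a i \<noteq> a j \<and> b i \<noteq> b j)"
    using Suc.IH[OF sg' deg' ce] by blast
  have nS: "\<forall>i<k. a i \<in> V \<and> b i \<in> V \<and> a i \<notin> S \<and> b i \<notin> S" using ab(1) unfolding V'_def by blast
  have EE: "\<And>u w. u \<notin> S \<Longrightarrow> w \<notin> S \<Longrightarrow> E' u w = E u w" unfolding E'_def by simp
  have ab2: "\<forall>i<k. \<forall>j<k. (E (a i) (b j) \<longleftrightarrow> i = j) \<and> \<not> E (a i) (a j)
      \<and> \<not> E (b i) (b j) \<and> a i \<noteq> b j \<and> (i \<noteq> j \<longrightarrow> a i \<noteq> a j \<and> b i \<noteq> b j)"
    using ab(2) nS EE by simp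
  have xS: "x \<in> S" "y \<in> S" using xy sym unfolding S_def by blast+
  have nx: "\<And>z. z \<notin> S \<Longrightarrow> \<not> E x z \<and> \<not> E y z \<and> \<not> E z x \<and> \<not> E z y"
    using sym unfolding S_def by blast
  let ?a = "a(k := x)" and ?b = "b(k := y)"
  have P1: "\<forall>i<Suc k. ?a i \<in> V \<and> ?b i \<in> V"
  proof (intro allI impI)
    fix i assume i: "i < Suc k"
    then show "?a i \<in> V \<and> ?b i \<in> V" using nS xy sym by (cases "i = k") auto
  qed
  have P2: "\<forall>i<Suc k. \<forall>j<Suc k. (E (?a i) (?b j) \<longleftrightarrow> i = j) \<and> \<not> E (?a i) (?a j)
      \<and> \<not> E (?b i) (?b j) \<and> ?a i \<noteq> ?b j \<and> (i \<noteq> j \<longrightarrow> ?a i \<noteq> ?a j \<and> ?b i \<noteq> ?b j)"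
  proof (intro allI impI)
    fix i j assume i: "i < Suc k" and j: "j < Suc k"
    consider "i < k" "j < k" | "i = k" "j < k" | "i < k" "j = k" | "i = k" "j = k" using i j by linarith
    then show "(E (?a i) (?b j) \<longleftrightarrow> i = j) \<and> \<not> E (?a i) (?a j)
      \<and> \<not> E (?b i) (?b j) \<and> ?a i \<noteq> ?b j \<and> (i \<noteq> j \<longrightarrow> ?a i \<noteq> ?a j \<and> ?b i \<noteq> ?b j)"
    proof cases
      case 1 then show ?thesis using ab2 by simp
    next
      case 2
      then have "a j \<notin> S" "b j \<notin> S" using nS by auto
      then show ?thesis using 2 nx xS by auto
    next
      case 3
      then have "a i \<notin> S" "b i \<notin> S" using nS by auto
      then show ?thesis using 3 nx xS by auto
    next
      case 4 then show ?thesis using xy sym by auto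
    qed
  qed
  show ?case using P1 P2 by blast
qed



lemma part3:
  assumes sg: "simple_graph V E" and cE: "card (edges E) \<ge> n * (2 * 2^(n+n) * 2^(n+n)) + 1"
  shows "has_vm_iso V E {0..<n} (complete_adj n) \<or> has_vm_iso V E (matching_verts n) (matching_adj n)"
proof (cases "\<exists>c\<in>V. card {y. E c y} \<ge> 2^(n+n)")
  case True
  then show ?thesis using high_degree[OF lc_refl sg] by blast
next
  case False
  define R :: nat where "R = 2^(n+n)"
  have deg: "\<forall>x. card {y. E x y} \<le> R"
  proof
    fix x show "card {y. E x y} \<le> R"
    proof (cases "x \<in> V")
      case True then have "\<not> card {y. E x y} \<ge> 2^(n+n)" using False by blast
      then show ?thesis unfolding R_def by linarith
    next
      case False
      then have "{y. E x y} = {}" using sg by (auto simp: simple_graph_def)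
      then show ?thesis by simp
    qed
  qed
  have cE': "card (edges E) \<ge> n * (2 * R * R) + 1" using cE by (simp only: R_def)
  obtain a b where ab: "\<forall>i<n. a i \<in> V \<and> b i \<in> V" "\<forall>i<n. \<forall>j<n. (E (a i) (b j) \<longleftrightarrow> i = j) \<and> \<not> E (a i) (a j)
      \<and> \<not> E (b i) (b j) \<and> a i \<noteq> b j \<and> (i \<noteq> j \<longrightarrow> a i \<noteq> a j \<and> b i \<noteq> b j)"
    using matching[OF sg deg cE'] by blast
  have sym: "\<forall>x y. E x y \<longrightarrow> E y x" using sg by (auto simp: simple_graph_def)
  define g where "g i = (if i < n then a i else b (i - n))" for i
  have inj: "inj_on g {0..<2*n}"
  proof (rule inj_onI)
    fix i j assume ij: "i \<in> {0..<2*n}" "j \<in> {0..<2*n}" "g i = g j"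
    show "i = j"
    proof (cases "i < n")
      case True
      show ?thesis
      proof (cases "j < n")
        case True then show ?thesis using \<open>i<n\<close> ij ab(2) unfolding g_def by auto
      next
        case False
        then have "j - n < n" using ij by auto
        then show ?thesis using \<open>i<n\<close> False ij ab(2) unfolding g_def by auto
      qed
    next
      case False
      then have i': "i - n < n" using ij by auto
      show ?thesis
      proof (cases "j < n")
        case True
        have "a j \<noteq> b (i - n)" using ab(2) True i' by blast
        then show ?thesis using False True ij unfolding g_def by auto
      next
        case False
        then have "j - n < n" using ij by auto
        then have "i - n = j - n" using \<open>\<not> i < n\<close> False i' ij ab(2) unfolding g_def by (metis (full_types))
        then show ?thesis using \<open>\<not> i < n\<close> False by linarith
      qed
    qed
  qed
  have im: "g ` {0..<2*n} \<subseteq> V"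
  proof
    fix z assume "z \<in> g ` {0..<2*n}"
    then obtain i where "i < 2*n" "z = g i" by auto
    then show "z \<in> V" using ab(1) unfolding g_def by (cases "i < n") auto
  qed
  have adj: "\<forall>i<2*n. \<forall>j<2*n. E (g i) (g j) \<longleftrightarrow> matching_adj n i j"
  proof (intro allI impI)
    fix i j assume i: "i < 2*n" and j: "j < 2*n"
    consider "i < n" "j < n" | "i < n" "\<not> j < n" | "\<not> i < n" "j < n" | "\<not> i < n" "\<not> j < n" by blast
    then show "E (g i) (g j) \<longleftrightarrow> matching_adj n i j"
    proof cases
      case 1 then show ?thesis using ab(2) i j unfolding g_def matching_adj_def by auto
    next
      case 2
      then have "j - n < n" using j by auto
      then have "E (a i) (b (j - n)) \<longleftrightarrow> i = j - n" using ab(2) 2 by blast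
      then show ?thesis using 2 i j unfolding g_def matching_adj_def by auto
    next
      case 3
      then have "i - n < n" using i by auto
      then have "E (a j) (b (i - n)) \<longleftrightarrow> j = i - n" using ab(2) 3 by blast
      moreover have "E (b (i - n)) (a j) \<longleftrightarrow> E (a j) (b (i - n))" using sym by blast
      ultimately show ?thesis using 3 i j unfolding g_def matching_adj_def by auto
    next
      case 4
      then have "i - n < n" "j - n < n" using i j by auto
      then have "\<not> E (b (i - n)) (b (j - n))" using ab(2) by blast
      then show ?thesis using 4 i j unfolding g_def matching_adj_def by auto
    qed
  qed
  have "has_vm_iso V E {0..<2*n} (matching_adj n)" by (rule realize[OF lc_refl inj im adj])
  then show ?thesis unfolding matching_verts_def by blast
qed


theorem theorem3p1:
  shows "(\<forall>n. \<exists>N. \<forall>(V::nat set) E. simple_graph V E \<and> card V \<ge> N \<longrightarrow>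
            has_vm_iso V E (edgeless_verts n) edgeless_adj)
       \<and> (\<forall>n. \<exists>N. \<forall>(V::nat set) E. simple_graph V E \<and> graph_connected V E \<and> card V \<ge> N \<longrightarrow>
            has_vm_iso V E {0..<n} (complete_adj n))
       \<and> (\<forall>n. \<exists>N. \<forall>(V::nat set) E. simple_graph V E \<and> card (edges E) \<ge> N \<longrightarrow>
            has_vm_iso V E {0..<n} (complete_adj n) \<or> has_vm_iso V E (matching_verts n) (matching_adj n))"
proof (intro conjI allI)
  fix n
  show "\<exists>N. \<forall>(V::nat set) E. simple_graph V E \<and> card V \<ge> N \<longrightarrow>
            has_vm_iso V E (edgeless_verts n) edgeless_adj"
    using part1 by blast
  show "\<exists>N. \<forall>(V::nat set) E. simple_graph V E \<and> graph_connected V E \<and> card V \<ge> N \<longrightarrow>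
            has_vm_iso V E {0..<n} (complete_adj n)"
    using part2 by blast
  show "\<exists>N. \<forall>(V::nat set) E. simple_graph V E \<and> card (edges E) \<ge> N \<longrightarrow>
            has_vm_iso V E {0..<n} (complete_adj n) \<or> has_vm_iso V E (matching_verts n) (matching_adj n)"
    using part3 by blast
qed

end
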